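(* Let $G$ be a ribbon graph and $e\in E(G)$. Then (1) $P_{\langle\delta\rangle}(G,x)=P_{\langle\delta\rangle}(G\setminus e,x)+P_{\langle\delta\rangle}(G/e,x)$; (2) $P_{\langle\tau\delta\tau\rangle}(G,x)=P_{\langle\tau\delta\tau\rangle}(G\setminus e,x)+P_{\langle\tau\delta\tau\rangle}(G^{\tau(e)}/e,x)$; (3) $P_{\langle\delta\tau\rangle}(G,x)=P_{\langle\delta\tau\rangle}(G\setminus e,x)+P_{\langle\delta\tau\rangle}(G/e,x)+P_{\langle\delta\tau\rangle}(G^{\tau(e)}/e,x)$; (4) $P_{\langle\delta,\tau\rangle}(G,x)=2\big[P_{\langle\delta,\tau\rangle}(G\setminus e,x)+P_{\langle\delta,\tau\rangle}(G/e,x)+P_{\langle\delta,\tau\rangle}(G^{\tau(e)}/e,x)\big]$.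
   Context: A ribbon graph $G=(V(G),E(G))$ is a (orientable or non-orientable) surface with boundary, represented as the union of a set $V(G)$ of vertex discs and a set $E(G)$ of edge discs (ribbons) such that vertices and edges intersect in disjoint line segments, each such segment lies on the boundary of exactly one vertex and exactly one edge, and every edge contains exactly two such segments. $v(G)$, $e(G)$ denote the numbers of vertices and edges. For $A\subseteq E(G)$, $G\setminus A$ is obtained by deleting the edges in $A$ while keeping all vertices. The partial dual $G^{\delta(A)}$ is obtained by gluing a disc along each boundary component of the spanning ribbon subgraph $(V(G),A)$ (these discs become the vertex discs), removing the interiors of the original vertex discs, and keeping the edge ribbons. The partial Petrial $G^{\tau(A)}$ adds a half-twist to each edge in $A$. Contraction: $G/e=G^{\delta(e)}\setminus e$. For a word $w=w_1\cdots w_n$ over $\{\delta,\tau\}$, $G^{w(A)}=(\cdots(G^{w_n(A)})^{w_{n-1}(A)}\cdots)^{w_1(A)}$ (rightmost letter applied first), $G^{1(A)}=G$, and $G^{\xi(A)\pi(B)}=(G^{\xi(A)})^{\pi(B)}$. Vertex polynomials (sums over ordered partitions of $E(G)$ into pairwise disjoint, possibly empty parts): $P_{\langle\delta\rangle}(G,x)=\sum_{A\subseteq E(G)}x^{v(G^{\delta(A)})}$; $P_{\langle\tau\delta\tau\rangle}(G,x)=\sum_{A\subseteq E(G)}x^{v(G^{\tau\delta\tau(A)})}$; $P_{\langle\delta\tau\rangle}(G,x)=\sum_{(A_1,A_2,A_3)}x^{v(G^{1(A_1)\tau\delta(A_2)\delta\tau(A_3)})}$; $P_{\langle\delta,\tau\rangle}(G,x)=\sum_{(A_1,\dots,A_6)}x^{v(G^{1(A_1)\delta(A_2)\tau(A_3)\tau\delta(A_4)\delta\tau(A_5)\tau\delta\tau(A_6)})}$.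 *)

theory Defs
  imports "HOL-Computational_Algebra.Polynomial" "HOL-Library.FuncSet"
begin

(* Combinatorial model of (possibly non-orientable) ribbon graphs via
   graph-encoded maps (gems / flags).  Each edge e carries four flags
   (e, i, s): i = which end of the ribbon, s = which side.  The three
   involutions of the gem are
     alpha (e,i,s) = (e, \<not>i, s)   (other end, same side)   -- fixed
     beta  (e,i,s) = (e, i, \<not>s)   (same end, other side)   -- fixed
     gam                              (corner at a vertex)     -- the data
   Vertices incident to edges are the orbits of <beta, gam>; isolated
   vertices (which carry no flags) are counted separately by riso. *)

type_synonym 'e flag = "'e \<times> bool \<times> bool"

record 'e rgraph =
  redges :: "'e set"
  rgam   :: "'e flag \<Rightarrow> 'e flag"
  riso   :: nat

definition eflags :: "'e set \<Rightarrow> 'e flag set" where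
  "eflags A = A \<times> (UNIV :: (bool \<times> bool) set)"

definition fl_alpha :: "'e flag \<Rightarrow> 'e flag" where
  "fl_alpha = (\<lambda>(e,i,s). (e, \<not> i, s))"

definition fl_beta :: "'e flag \<Rightarrow> 'e flag" where
  "fl_beta = (\<lambda>(e,i,s). (e, i, \<not> s))"

definition ribbon_graph :: "'e rgraph \<Rightarrow> bool" where
  "ribbon_graph G \<longleftrightarrow> finite (redges G) \<and>
     (\<forall>f \<in> eflags (redges G). rgam G f \<in> eflags (redges G)
        \<and> rgam G (rgam G f) = f \<and> rgam G f \<noteq> f)"

definition vrel :: "'e rgraph \<Rightarrow> ('e flag \<times> 'e flag) set" where
  "vrel G = {(f, fl_beta f) | f. f \<in> eflags (redges G)}
          \<union> {(f, rgam G f) | f. f \<in> eflags (redges G)}"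

definition vcount :: "'e rgraph \<Rightarrow> nat" where
  "vcount G = card (eflags (redges G) // (vrel G)\<^sup>*) + riso G"

(* partial Petrial G^{tau(A)}: on edges of A, alpha becomes alpha o beta;
   relabelling the sides at end True of those edges restores the standard
   alpha, beta and conjugates gam. *)
definition tw_map :: "'e set \<Rightarrow> 'e flag \<Rightarrow> 'e flag" where
  "tw_map A = (\<lambda>(e,i,s). if e \<in> A \<and> i then (e, i, \<not> s) else (e, i, s))"

definition ppetrial :: "'e set \<Rightarrow> 'e rgraph \<Rightarrow> 'e rgraph" where
  "ppetrial A G = G\<lparr>rgam := tw_map A \<circ> rgam G \<circ> tw_map A\<rparr>"

(* partial dual G^{delta(A)}: on edges of A, alpha and beta are swapped;
   relabelling (e,i,s) -> (e,s,i) on those edges restores standard alpha,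
   beta and conjugates gam. *)
definition dl_map :: "'e set \<Rightarrow> 'e flag \<Rightarrow> 'e flag" where
  "dl_map A = (\<lambda>(e,i,s). if e \<in> A then (e, s, i) else (e, i, s))"

definition pdual :: "'e set \<Rightarrow> 'e rgraph \<Rightarrow> 'e rgraph" where
  "pdual A G = G\<lparr>rgam := dl_map A \<circ> rgam G \<circ> dl_map A\<rparr>"

(* deletion G \ e: remove the four flags of e; the corner map skips over
   the ends of e; vertices all of whose flags belong to e become isolated. *)
definition del_edge :: "'e \<Rightarrow> 'e rgraph \<Rightarrow> 'e rgraph" where
  "del_edge e G = G\<lparr>redges := redges G - {e},
     rgam := (\<lambda>f. let k = (LEAST k. ((rgam G \<circ> fl_beta) ^^ k) (rgam G f) \<notin> eflags {e})
                 in ((rgam G \<circ> fl_beta) ^^ k) (rgam G f)),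
     riso := riso G + card {C \<in> eflags (redges G) // (vrel G)\<^sup>*. C \<subseteq> eflags {e}}\<rparr>"

definition contract :: "'e \<Rightarrow> 'e rgraph \<Rightarrow> 'e rgraph" where
  "contract e G = del_edge e (pdual {e} G)"

(* words: rightmost letter is applied first *)
definition op_td :: "'e set \<Rightarrow> 'e rgraph \<Rightarrow> 'e rgraph" where
  "op_td A G = ppetrial A (pdual A G)"

definition op_dt :: "'e set \<Rightarrow> 'e rgraph \<Rightarrow> 'e rgraph" where
  "op_dt A G = pdual A (ppetrial A G)"

definition op_tdt :: "'e set \<Rightarrow> 'e rgraph \<Rightarrow> 'e rgraph" where
  "op_tdt A G = ppetrial A (pdual A (ppetrial A G))"

(* ordered partitions (A_0,...,A_{k-1}) of E encoded by c \<in> E \<rightarrow>\<^sub>E {..<k},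
   A_i = blk E c i *)
definition blk :: "'e set \<Rightarrow> ('e \<Rightarrow> nat) \<Rightarrow> nat \<Rightarrow> 'e set" where
  "blk E c i = {e \<in> E. c e = i}"

definition P_d :: "'e rgraph \<Rightarrow> int poly" where
  "P_d G = (\<Sum>A \<in> Pow (redges G). monom 1 (vcount (pdual A G)))"

definition P_tdt :: "'e rgraph \<Rightarrow> int poly" where
  "P_tdt G = (\<Sum>A \<in> Pow (redges G). monom 1 (vcount (op_tdt A G)))"

(* G^{1(A1) tau delta(A2) delta tau(A3)} *)
definition P_dt :: "'e rgraph \<Rightarrow> int poly" where
  "P_dt G = (\<Sum>c \<in> redges G \<rightarrow>\<^sub>E {..<3}.
     monom 1 (vcount (op_dt (blk (redges G) c 2) (op_td (blk (redges G) c 1) G))))"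

(* G^{1(A1) delta(A2) tau(A3) tau delta(A4) delta tau(A5) tau delta tau(A6)} *)
definition P_all :: "'e rgraph \<Rightarrow> int poly" where
  "P_all G = (\<Sum>c \<in> redges G \<rightarrow>\<^sub>E {..<6}.
     monom 1 (vcount
       (op_tdt (blk (redges G) c 5)
        (op_dt (blk (redges G) c 4)
         (op_td (blk (redges G) c 3)
          (ppetrial (blk (redges G) c 2)
           (pdual (blk (redges G) c 1) G)))))))"

end

theory Submission
  imports Defs
begin


lemma eflags_iff: "f \<in> eflags A \<longleftrightarrow> fst f \<in> A"
  by (cases f) (auto simp: eflags_def)

lemma eflags_diff: "eflags (A - B) = eflags A - eflags B"
  by (auto simp: eflags_def)

lemma fst_beta[simp]: "fst (fl_beta f) = fst f"
  by (cases f) (simp add: fl_beta_def)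

lemma beta_beta[simp]: "fl_beta (fl_beta f) = f"
  by (cases f) (simp add: fl_beta_def)

lemma beta_eflags[simp]: "fl_beta f \<in> eflags A \<longleftrightarrow> f \<in> eflags A"
  by (simp add: eflags_iff)

lemma finite_eflags: "finite A \<Longrightarrow> finite (eflags A)"
  by (simp add: eflags_def)

lemma funpow_in: "(\<And>x. x \<in> F \<Longrightarrow> r x \<in> F) \<Longrightarrow> w \<in> F \<Longrightarrow> (r ^^ n) w \<in> F"
  by (induction n) auto

lemma inj_on_funpow_gen: "inj_on r F \<Longrightarrow> (\<And>x. x \<in> F \<Longrightarrow> r x \<in> F) \<Longrightarrow> inj_on (r ^^ n) F"
proof (induction n)
  case 0 then show ?case by simp
next
  case (Suc n)
  have "inj_on (r \<circ> (r ^^ n)) F"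
    by (rule comp_inj_on) (use Suc funpow_in[of F r] in \<open>auto intro: inj_on_subset\<close>)
  then show ?case by (simp add: o_def)
qed

lemma periodic:
  assumes fin: "finite F" and inj: "inj_on r F" and cl: "\<And>x. x \<in> F \<Longrightarrow> r x \<in> F" and w: "w \<in> F"
  shows "\<exists>p>0. (r ^^ p) w = w"
proof -
  let ?phi = "\<lambda>n. (r ^^ n) w"
  have "?phi ` {0..card F} \<subseteq> F" using funpow_in[of F r, OF cl w] by auto
  then have "card (?phi ` {0..card F}) \<le> card F" by (rule card_mono[OF fin])
  then have "\<not> inj_on ?phi {0..card F}"
    using card_image by fastforce
  then obtain i j where ij: "i \<in> {0..card F}" "j \<in> {0..card F}" "i \<noteq> j" "?phi i = ?phi j"
    unfolding inj_on_def by blast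
  { fix i j assume lt: "i < j" and eq: "?phi i = ?phi j"
    have "(r ^^ j) w = (r ^^ i) ((r ^^ (j - i)) w)"
      using lt by (metis funpow_add le_add_diff_inverse less_imp_le comp_apply)
    then have "(r ^^ i) ((r ^^ (j - i)) w) = (r ^^ i) w" using eq by simp
    moreover have "(r ^^ (j - i)) w \<in> F" using funpow_in[of F r, OF cl w] .
    ultimately have "(r ^^ (j - i)) w = w"
      using inj_on_funpow_gen[OF inj cl, of i] w unfolding inj_on_def by blast
    then have "\<exists>p>0. (r ^^ p) w = w" using lt by (intro exI[of _ "j - i"]) auto }
  note * = this
  show ?thesis
  proof (cases "i < j")
    case True then show ?thesis using * ij by blast
  next
    case False then have "j < i" using ij by simp
    then show ?thesis using * ij by metis
  qed
qed



locale rgl =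
  fixes H :: "'e rgraph"
  assumes rg: "ribbon_graph H"
begin

abbreviation "FF \<equiv> eflags (redges H)"
abbreviation "gg \<equiv> rgam H"
definition rr :: "'e flag \<Rightarrow> 'e flag" where "rr = rgam H \<circ> fl_beta"

lemma rr_apply: "rr f = gg (fl_beta f)"
  by (simp add: rr_def)
abbreviation "RR \<equiv> vrel H"

lemma finF: "finite FF"
  using rg by (simp add: ribbon_graph_def finite_eflags)

lemma g_in: "f \<in> FF \<Longrightarrow> gg f \<in> FF"
  using rg by (simp add: ribbon_graph_def)

lemma g_g: "f \<in> FF \<Longrightarrow> gg (gg f) = f"
  using rg by (simp add: ribbon_graph_def)

lemma r_in: "f \<in> FF \<Longrightarrow> rr f \<in> FF"
  by (simp add: g_in rr_apply)

lemma rn_in: "f \<in> FF \<Longrightarrow> (rr ^^ n) f \<in> FF"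
  by (rule funpow_in[of FF rr, OF r_in])

lemma inj_r: "inj_on rr FF"
proof (rule inj_onI)
  fix x y assume "x \<in> FF" "y \<in> FF" "rr x = rr y"
  then have "gg (gg (fl_beta x)) = gg (gg (fl_beta y))" by (simp add: rr_apply)
  then have "fl_beta x = fl_beta y" using g_g \<open>x \<in> FF\<close> \<open>y \<in> FF\<close> by simp
  then show "x = y" by (metis beta_beta)
qed

lemma r_periodic: "f \<in> FF \<Longrightarrow> \<exists>p>0. (rr ^^ p) f = f"
  by (rule periodic[OF finF inj_r r_in])

lemma r_b_r: "f \<in> FF \<Longrightarrow> rr (fl_beta (rr f)) = fl_beta f"
  by (simp add: g_g rr_apply)

lemma rn_b_rn: "f \<in> FF \<Longrightarrow> (rr ^^ n) (fl_beta ((rr ^^ n) f)) = fl_beta f"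
proof (induction n)
  case 0 then show ?case by simp
next
  case (Suc n)
  have o1: "(rr ^^ Suc n) y = (rr ^^ n) (rr y)" for y
    by (simp only: funpow_Suc_right comp_apply)
  have o2: "(rr ^^ Suc n) f = rr ((rr ^^ n) f)" by simp
  have "(rr ^^ Suc n) (fl_beta ((rr ^^ Suc n) f)) = (rr ^^ n) (rr (fl_beta (rr ((rr ^^ n) f))))"
    by (simp only: o1[of "fl_beta _"] o2)
  also have "\<dots> = (rr ^^ n) (fl_beta ((rr ^^ n) f))"
    using r_b_r[OF rn_in[OF Suc.prems, of n]] by simp
  also have "\<dots> = fl_beta f" by (rule Suc.IH[OF Suc.prems])
  finally show ?case .
qed

lemma b_rn: "f \<in> FF \<Longrightarrow> \<exists>j. fl_beta ((rr ^^ n) f) = (rr ^^ j) (fl_beta f)"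
proof -
  assume f: "f \<in> FF"
  let ?w = "fl_beta ((rr ^^ n) f)"
  have w: "?w \<in> FF" using rn_in[OF f] by simp
  obtain p where p: "p > 0" "(rr ^^ p) ?w = ?w" using r_periodic[OF w] by blast
  have pk: "(rr ^^ (p * k)) ?w = ?w" for k
    by (induction k) (simp_all add: funpow_add p(2))
  note pm = pk[of n]
  have "(rr ^^ (p * n - n)) (fl_beta f) = (rr ^^ (p * n - n)) ((rr ^^ n) ?w)"
    using rn_b_rn[OF f, of n] by simp
  also have "\<dots> = (rr ^^ (p * n - n + n)) ?w"
    by (simp add: funpow_add)
  also have "p * n - n + n = p * n"
    using p(1) by (metis le_add_diff_inverse2 mult_le_mono1 mult_1 One_nat_def Suc_leI)
  finally show ?thesis using pm by metis
qed

lemma RR_iff: "(x, y) \<in> RR \<longleftrightarrow> x \<in> FF \<and> (y = fl_beta x \<or> y = gg x)"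
  unfolding vrel_def by blast

lemma g_rn: assumes u: "u \<in> FF" shows "\<exists>j. gg ((rr ^^ n) u) = (rr ^^ j) (fl_beta u)"
proof (cases n)
  case 0
  have "gg u = rr (fl_beta u)" by (simp add: rr_apply)
  then show ?thesis using 0 by (intro exI[of _ 1]) simp
next
  case (Suc m)
  have "gg ((rr ^^ n) u) = fl_beta ((rr ^^ m) u)"
    using Suc g_g[of "fl_beta ((rr ^^ m) u)"] rn_in[OF u, of m] by (simp add: rr_apply)
  then show ?thesis using b_rn[OF u, of m] by metis
qed

lemma orbit:
  assumes x: "x \<in> FF"
  shows "RR\<^sup>* `` {x} = range (\<lambda>n. (rr ^^ n) x) \<union> range (\<lambda>n. (rr ^^ n) (fl_beta x))"
proof
  show "RR\<^sup>* `` {x} \<subseteq> range (\<lambda>n. (rr ^^ n) x) \<union> range (\<lambda>n. (rr ^^ n) (fl_beta x))"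
  proof
    fix y assume "y \<in> RR\<^sup>* `` {x}"
    then have "(x, y) \<in> RR\<^sup>*" by simp
    then show "y \<in> range (\<lambda>n. (rr ^^ n) x) \<union> range (\<lambda>n. (rr ^^ n) (fl_beta x))"
    proof (induction rule: rtrancl_induct)
      case base then show ?case by (metis UnI1 funpow_0 rangeI)
    next
      case (step y z)
      have bx: "fl_beta x \<in> FF" using x by simp
      from step.IH show ?case
      proof
        assume "y \<in> range (\<lambda>n. (rr ^^ n) x)"
        then obtain n where y: "y = (rr ^^ n) x" by auto
        have "z = fl_beta y \<or> z = gg y" using step.hyps(2) RR_iff by blast
        then show ?thesis using b_rn[OF x, of n] g_rn[OF x, of n] y by auto
      next
        assume "y \<in> range (\<lambda>n. (rr ^^ n) (fl_beta x))"
        then obtain n where y: "y = (rr ^^ n) (fl_beta x)" by auto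
        have "z = fl_beta y \<or> z = gg y" using step.hyps(2) RR_iff by blast
        then show ?thesis using b_rn[OF bx, of n] g_rn[OF bx, of n] y by auto
      qed
    qed
  qed
next
  have rstep: "(y, rr y) \<in> RR\<^sup>*" if "y \<in> FF" for y
  proof -
    have "(y, fl_beta y) \<in> RR" "(fl_beta y, gg (fl_beta y)) \<in> RR" using that by (auto simp: RR_iff)
    then show ?thesis by (auto simp: rr_apply)
  qed
  have rn: "(y, (rr ^^ n) y) \<in> RR\<^sup>*" if "y \<in> FF" for y n
  proof (induction n)
    case 0 then show ?case by simp
  next
    case (Suc n) then show ?case
      using rstep[OF rn_in[OF that, of n]] by (simp add: rtrancl_trans)
  qed
  have "(x, fl_beta x) \<in> RR" using x by (simp add: RR_iff)
  then show "range (\<lambda>n. (rr ^^ n) x) \<union> range (\<lambda>n. (rr ^^ n) (fl_beta x)) \<subseteq> RR\<^sup>* `` {x}"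
    using rn[OF x] rn[of "fl_beta x"] x by (auto intro: rtrancl_trans)
qed

lemma RR_sub: "RR \<subseteq> FF \<times> FF"
  by (auto simp: RR_iff g_in)

lemma class_sub: "x \<in> FF \<Longrightarrow> RR\<^sup>* `` {x} \<subseteq> FF"
proof
  fix y assume "x \<in> FF" "y \<in> RR\<^sup>* `` {x}"
  then have "(x, y) \<in> RR\<^sup>*" by simp
  then show "y \<in> FF" using \<open>x \<in> FF\<close> by induction (use RR_sub in auto)
qed

lemma sym_RR: "sym (RR\<^sup>*)"
proof -
  have "sym RR" unfolding sym_def using g_g g_in by (auto simp: RR_iff)
  then show ?thesis by (rule sym_rtrancl)
qed

lemma class_eq: "y \<in> RR\<^sup>* `` {x} \<Longrightarrow> RR\<^sup>* `` {y} = RR\<^sup>* `` {x}"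
proof -
  assume "y \<in> RR\<^sup>* `` {x}"
  then have xy: "(x, y) \<in> RR\<^sup>*" by simp
  then have yx: "(y, x) \<in> RR\<^sup>*" using sym_RR by (rule symD[rotated])
  show ?thesis
  proof
    show "RR\<^sup>* `` {y} \<subseteq> RR\<^sup>* `` {x}" using xy by (auto intro: rtrancl_trans)
    show "RR\<^sup>* `` {x} \<subseteq> RR\<^sup>* `` {y}" using yx by (auto intro: rtrancl_trans)
  qed
qed

end



locale rgle = rgl +
  fixes e :: 'a
  assumes e_in: "e \<in> redges H"
begin

abbreviation "Fe \<equiv> eflags {e}"
abbreviation "F' \<equiv> eflags (redges H - {e})"
abbreviation "H' \<equiv> del_edge e H"
abbreviation "R' \<equiv> vrel (del_edge e H)"

definition kk :: "'a flag \<Rightarrow> nat" where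
  "kk f = (LEAST k. (rr ^^ k) (gg f) \<notin> Fe)"

lemma g'_eq: "rgam H' f = (rr ^^ kk f) (gg f)"
  by (simp add: del_edge_def Let_def kk_def rr_def)

lemma redges_H'[simp]: "redges H' = redges H - {e}"
  by (simp add: del_edge_def)

lemma F'_eq: "F' = FF - Fe"
  by (rule eflags_diff)

lemma Fe_sub: "Fe \<subseteq> FF"
  using e_in by (auto simp: eflags_def)

lemma g'_in: assumes f: "f \<in> F'" shows "rgam H' f \<in> F'"
proof -
  have bf: "fl_beta f \<in> FF" "fl_beta f \<notin> Fe" using f F'_eq by auto
  obtain p where p: "p > 0" "(rr ^^ p) (fl_beta f) = fl_beta f"
    using r_periodic[OF bf(1)] by blast
  then obtain q where q: "p = Suc q" by (cases p) auto
  have "(rr ^^ q) (gg f) = fl_beta f"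
    using p(2) q by (simp add: funpow_Suc_right rr_apply del: funpow.simps)
  then have ex: "(rr ^^ q) (gg f) \<notin> Fe" using bf by simp
  have "(rr ^^ kk f) (gg f) \<notin> Fe"
    unfolding kk_def by (rule LeastI[of _ q]) (rule ex)
  moreover have "(rr ^^ kk f) (gg f) \<in> FF"
    using f F'_eq g_in rn_in by auto
  ultimately show ?thesis using g'_eq F'_eq by simp
qed

lemma R'_iff: "(x, y) \<in> R' \<longleftrightarrow> x \<in> F' \<and> (y = fl_beta x \<or> y = rgam H' x)"
  unfolding vrel_def redges_H' by blast

lemma rstep: "y \<in> FF \<Longrightarrow> (y, rr y) \<in> RR\<^sup>*"
proof -
  assume "y \<in> FF"
  then have "(y, fl_beta y) \<in> RR" "(fl_beta y, gg (fl_beta y)) \<in> RR" by (auto simp: RR_iff)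
  then show ?thesis by (auto simp: rr_apply)
qed

lemma rnstep: "y \<in> FF \<Longrightarrow> (y, (rr ^^ n) y) \<in> RR\<^sup>*"
proof (induction n)
  case 0 then show ?case by simp
next
  case (Suc n) then show ?case
    using rstep[OF rn_in[OF Suc.prems, of n]] by (simp add: rtrancl_trans)
qed

lemma R'_sub: "(x, y) \<in> R' \<Longrightarrow> (x, y) \<in> RR\<^sup>* \<and> y \<in> F'"
proof -
  assume xy: "(x, y) \<in> R'"
  then have x: "x \<in> F'" and y: "y = fl_beta x \<or> y = rgam H' x" by (auto simp: R'_iff)
  have xF: "x \<in> FF" using x F'_eq by auto
  show ?thesis
  proof (cases "y = fl_beta x")
    case True then show ?thesis using x xF by (auto simp: RR_iff)
  next
    case False
    then have y: "y = (rr ^^ kk x) (gg x)" using y g'_eq by simp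
    have "(x, gg x) \<in> RR" using xF by (simp add: RR_iff)
    moreover have "(gg x, y) \<in> RR\<^sup>*" using y rnstep g_in[OF xF] by simp
    ultimately show ?thesis using g'_in[OF x] y g'_eq by auto
  qed
qed

lemma fr: "w \<in> F' \<Longrightarrow> (rr ^^ n) w \<in> F' \<Longrightarrow> (w, (rr ^^ n) w) \<in> R'\<^sup>*"
proof (induction n arbitrary: w rule: less_induct)
  case (less n)
  show ?case
  proof (cases n)
    case 0 then show ?thesis by simp
  next
    case (Suc m)
    have w: "w \<in> FF" "w \<notin> Fe" using less.prems F'_eq by auto
    have bw: "fl_beta w \<in> F'" using less.prems by (simp add: eflags_iff)
    have grw: "gg (fl_beta w) = rr w" by (simp add: rr_apply)
    have "(rr ^^ m) (gg (fl_beta w)) = (rr ^^ n) w"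
      using Suc grw by (simp add: funpow_Suc_right del: funpow.simps)
    then have Pm: "(rr ^^ m) (gg (fl_beta w)) \<notin> Fe" using less.prems F'_eq by auto
    let ?k = "kk (fl_beta w)"
    have km: "?k \<le> m" unfolding kk_def by (rule Least_le) (rule Pm)
    define w' where "w' = rgam H' (fl_beta w)"
    have w'1: "w' = (rr ^^ ?k) (rr w)" using g'_eq grw w'_def by simp
    have w'F: "w' \<in> F'" using g'_in[OF bw] w'_def by simp
    have "(w, fl_beta w) \<in> R'" "(fl_beta w, w') \<in> R'"
      using less.prems bw w'_def by (auto simp: R'_iff)
    then have s1: "(w, w') \<in> R'\<^sup>*" by auto
    have "(rr ^^ (m - ?k)) w' = (rr ^^ (m - ?k + ?k)) (rr w)"
      using w'1 by (simp add: funpow_add)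
    also have "\<dots> = (rr ^^ n) w" using km Suc by (simp add: funpow_Suc_right del: funpow.simps)
    finally have eq: "(rr ^^ (m - ?k)) w' = (rr ^^ n) w" .
    have "(w', (rr ^^ (m - ?k)) w') \<in> R'\<^sup>*"
      using less.IH[of "m - ?k" w'] Suc w'F eq less.prems by simp
    then show ?thesis using s1 eq by (auto intro: rtrancl_trans)
  qed
qed

lemma del_class: assumes x: "x \<in> F'" shows "R'\<^sup>* `` {x} = RR\<^sup>* `` {x} \<inter> F'"
proof
  show "R'\<^sup>* `` {x} \<subseteq> RR\<^sup>* `` {x} \<inter> F'"
  proof
    fix y assume "y \<in> R'\<^sup>* `` {x}"
    then have "(x, y) \<in> R'\<^sup>*" by simp
    then have "(x, y) \<in> RR\<^sup>* \<and> y \<in> F'"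
      by induction (use x R'_sub in \<open>auto intro: rtrancl_trans\<close>)
    then show "y \<in> RR\<^sup>* `` {x} \<inter> F'" by simp
  qed
next
  show "RR\<^sup>* `` {x} \<inter> F' \<subseteq> R'\<^sup>* `` {x}"
  proof
    fix y assume y: "y \<in> RR\<^sup>* `` {x} \<inter> F'"
    have xF: "x \<in> FF" using x F'_eq by auto
    have bx: "fl_beta x \<in> F'" using x by (simp add: eflags_iff)
    from y orbit[OF xF] obtain n where "y = (rr ^^ n) x \<or> y = (rr ^^ n) (fl_beta x)" by auto
    then show "y \<in> R'\<^sup>* `` {x}"
    proof
      assume "y = (rr ^^ n) x" then show ?thesis using fr[OF x, of n] y by simp
    next
      assume yy: "y = (rr ^^ n) (fl_beta x)"
      have "(x, fl_beta x) \<in> R'" using x by (simp add: R'_iff)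
      then show ?thesis using fr[OF bx, of n] y yy by (auto intro: rtrancl_trans)
    qed
  qed
qed

lemma vcount_del: "vcount H' = vcount H"
proof -
  let ?Q = "FF // RR\<^sup>*"
  let ?A = "{C \<in> ?Q. C \<subseteq> Fe}"
  let ?B = "{C \<in> ?Q. \<not> C \<subseteq> Fe}"
  have finQ: "finite ?Q" unfolding quotient_def using finF by simp
  have cQ: "card ?Q = card ?A + card ?B"
    using finQ by (subst card_Un_disjoint[symmetric]) (auto intro: arg_cong[where f=card])
  have img: "(\<lambda>C. C \<inter> F') ` ?B = F' // R'\<^sup>*"
  proof
    show "(\<lambda>C. C \<inter> F') ` ?B \<subseteq> F' // R'\<^sup>*"
    proof
      fix D assume "D \<in> (\<lambda>C. C \<inter> F') ` ?B"
      then obtain C where C: "C \<in> ?Q" "\<not> C \<subseteq> Fe" "D = C \<inter> F'" by auto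
      then obtain x where x: "x \<in> FF" "C = RR\<^sup>* `` {x}" by (auto simp: quotient_def)
      obtain y where y: "y \<in> C" "y \<notin> Fe" using C by auto
      have yF': "y \<in> F'" using y class_sub[OF x(1)] x(2) F'_eq by blast
      have "C = RR\<^sup>* `` {y}" using class_eq y x by simp
      then have "D = R'\<^sup>* `` {y}" using del_class[OF yF'] C by simp
      then show "D \<in> F' // R'\<^sup>*" using yF' by (auto simp: quotient_def)
    qed
  next
    show "F' // R'\<^sup>* \<subseteq> (\<lambda>C. C \<inter> F') ` ?B"
    proof
      fix D assume "D \<in> F' // R'\<^sup>*"
      then obtain y where y: "y \<in> F'" "D = R'\<^sup>* `` {y}" by (auto simp: quotient_def)
      have yF: "y \<in> FF" "y \<notin> Fe" using y F'_eq by auto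
      have "RR\<^sup>* `` {y} \<in> ?B" using yF by (auto simp: quotient_def)
      moreover have "D = RR\<^sup>* `` {y} \<inter> F'" using del_class y by simp
      ultimately show "D \<in> (\<lambda>C. C \<inter> F') ` ?B" by blast
    qed
  qed
  have inj: "inj_on (\<lambda>C. C \<inter> F') ?B"
  proof (rule inj_onI)
    fix C1 C2 assume C1: "C1 \<in> ?B" and C2: "C2 \<in> ?B" and eq: "C1 \<inter> F' = C2 \<inter> F'"
    from C1 obtain x where x: "x \<in> FF" "C1 = RR\<^sup>* `` {x}" by (auto simp: quotient_def)
    obtain y where y: "y \<in> C1" "y \<notin> Fe" using C1 by auto
    have yF': "y \<in> F'" using y class_sub[OF x(1)] x(2) F'_eq by blast
    from C2 obtain x2 where x2: "x2 \<in> FF" "C2 = RR\<^sup>* `` {x2}" by (auto simp: quotient_def)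
    have "y \<in> C2" using eq y yF' by blast
    then show "C1 = C2" using class_eq x x2 y by metis
  qed
  have cB: "card (F' // R'\<^sup>*) = card ?B"
    using card_image[OF inj] img by simp
  have "vcount H' = card (F' // R'\<^sup>*) + (riso H + card ?A)"
    unfolding vcount_def by (simp add: del_edge_def)
  then show ?thesis unfolding vcount_def using cQ cB by simp
qed

end

lemma vcount_del_edge: "ribbon_graph H \<Longrightarrow> e \<in> redges H \<Longrightarrow> vcount (del_edge e H) = vcount H"
  using rgle.vcount_del[of H e] by (simp add: rgle_def rgl_def rgle_axioms_def)



definition cnj :: "('e flag \<Rightarrow> 'e flag) \<Rightarrow> 'e rgraph \<Rightarrow> 'e rgraph" where
  "cnj m H = H\<lparr>rgam := m \<circ> rgam H \<circ> m\<rparr>"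

lemma pdual_conj: "pdual A H = cnj (dl_map A) H"
  by (simp add: pdual_def cnj_def)

lemma ppetrial_conj: "ppetrial A H = cnj (tw_map A) H"
  by (simp add: ppetrial_def cnj_def)

lemma cnj_simps[simp]: "redges (cnj m H) = redges H" "riso (cnj m H) = riso H"
  "rgam (cnj m H) = m \<circ> rgam H \<circ> m"
  by (simp_all add: cnj_def)

lemma cnj_conj: "(\<And>x. m (m x) = x) \<Longrightarrow> cnj m (cnj m H) = H"
  by (simp add: cnj_def comp_def)

lemma vrel_img: "vrel H `` {f} = (if f \<in> eflags (redges H) then {fl_beta f, rgam H f} else {})"
proof (cases "f \<in> eflags (redges H)")
  case True
  then show ?thesis unfolding vrel_def by (simp only: if_True) blast
next
  case False
  then show ?thesis unfolding vrel_def by (simp only: if_False) blast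
qed

lemma rg_conj:
  assumes inv: "\<And>x. m (m x) = x" and pres: "\<And>x. fst (m x) = fst x" and rg: "ribbon_graph H"
  shows "ribbon_graph (cnj m H)"
proof -
  have mF: "m x \<in> eflags A \<longleftrightarrow> x \<in> eflags A" for x A by (simp add: eflags_iff pres)
  have fin: "finite (redges H)" using rg by (simp add: ribbon_graph_def)
  have gi: "rgam H f \<in> eflags (redges H)" "rgam H (rgam H f) = f" "rgam H f \<noteq> f"
    if "f \<in> eflags (redges H)" for f using rg that by (auto simp: ribbon_graph_def)
  have "m (rgam H (m f)) \<in> eflags (redges H) \<and> m (rgam H (m (m (rgam H (m f))))) = f
        \<and> m (rgam H (m f)) \<noteq> f" if f: "f \<in> eflags (redges H)" for f
  proof -
    have mf: "m f \<in> eflags (redges H)" using f mF by simp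
    have 1: "m (rgam H (m f)) \<in> eflags (redges H)" using gi(1)[OF mf] mF by simp
    have 2: "m (rgam H (m (m (rgam H (m f))))) = f" using gi(2)[OF mf] inv by simp
    have 3: "m (rgam H (m f)) \<noteq> f"
    proof
      assume "m (rgam H (m f)) = f"
      then have "m (m (rgam H (m f))) = m f" by simp
      then show False using gi(3)[OF mf] inv by simp
    qed
    show ?thesis using 1 2 3 by blast
  qed
  then show ?thesis using fin unfolding ribbon_graph_def by simp
qed

lemma rtr_local:
  assumes cl: "R `` S \<subseteq> S" and x: "x \<in> S" and loc: "\<And>f. f \<in> S \<Longrightarrow> R `` {f} = R' `` {f}"
  shows "R'\<^sup>* `` {x} = R\<^sup>* `` {x}"
proof -
  have a: "(x, y) \<in> R'\<^sup>* \<and> y \<in> S" if "(x, y) \<in> R\<^sup>*" for y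
    using that
  proof induction
    case base then show ?case using x by simp
  next
    case (step y z)
    then have "z \<in> R' `` {y}" using loc[of y] by auto
    moreover have "z \<in> S" using step cl by auto
    ultimately show ?case using step by (auto intro: rtrancl_into_rtrancl)
  qed
  have b: "(x, y) \<in> R\<^sup>* \<and> y \<in> S" if "(x, y) \<in> R'\<^sup>*" for y
    using that
  proof induction
    case base then show ?case using x by simp
  next
    case (step y z)
    then have "z \<in> R `` {y}" using loc[of y] by auto
    moreover then have "z \<in> S" using step cl by auto
    ultimately show ?case using step by (auto intro: rtrancl_into_rtrancl)
  qed
  show ?thesis using a b by blast
qed

lemma eclasses_sub:
  assumes inv: "\<And>x. m (m x) = x" and mfix: "\<And>f. f \<in> eflags {e} \<Longrightarrow> m f = f"
    and e: "e \<in> redges H"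
  shows "{C \<in> eflags (redges H) // (vrel H)\<^sup>*. C \<subseteq> eflags {e}}
     \<subseteq> {C \<in> eflags (redges H) // (vrel (cnj m H))\<^sup>*. C \<subseteq> eflags {e}}"
proof
  fix C assume "C \<in> {C \<in> eflags (redges H) // (vrel H)\<^sup>*. C \<subseteq> eflags {e}}"
  then obtain x where x: "x \<in> eflags (redges H)" "C = (vrel H)\<^sup>* `` {x}" and Ce: "C \<subseteq> eflags {e}"
    by (auto simp: quotient_def)
  have Fe: "eflags {e} \<subseteq> eflags (redges H)" using e by (auto simp: eflags_iff)
  have cl: "vrel H `` C \<subseteq> C" using x(2) by (auto intro: rtrancl_into_rtrancl)
  have loc: "vrel H `` {f} = vrel (cnj m H) `` {f}" if f: "f \<in> C" for f
  proof -
    have fe: "f \<in> eflags {e}" using f Ce by auto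
    have "(f, rgam H f) \<in> vrel H" using fe Fe unfolding vrel_def by blast
    then have "rgam H f \<in> C" using cl f by blast
    then have "m (rgam H f) = rgam H f" by (intro mfix) (use Ce in blast)
    then show ?thesis using fe Fe mfix[OF fe] by (simp add: vrel_img)
  qed
  have "(vrel (cnj m H))\<^sup>* `` {x} = C"
    using rtr_local[OF cl _ loc] x by simp
  then show "C \<in> {C \<in> eflags (redges H) // (vrel (cnj m H))\<^sup>*. C \<subseteq> eflags {e}}"
    using x Ce by (auto simp: quotient_def)
qed

lemma rgam_del: "rgam (del_edge e G) f = (let k = (LEAST k. ((rgam G \<circ> fl_beta) ^^ k) (rgam G f) \<notin> eflags {e})
                 in ((rgam G \<circ> fl_beta) ^^ k) (rgam G f))"
  unfolding del_edge_def by simp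

lemma least_cong:
  assumes "\<And>k. (\<forall>j<k. \<not> P j) \<Longrightarrow> (Q k \<longleftrightarrow> P k)"
  shows "(LEAST k. Q k) = (LEAST k. (P :: nat \<Rightarrow> bool) k)"
proof (cases "\<exists>k. P k")
  case True
  let ?k = "LEAST k. P k"
  have Pk: "P ?k" using True by (rule LeastI_ex)
  have lt: "\<forall>j<?k. \<not> P j" by (intro allI impI not_less_Least)
  have Qk: "Q ?k" using assms[OF lt] Pk by simp
  have nQ: "\<not> Q j" if j: "j < ?k" for j
  proof -
    have "\<forall>i<j. \<not> P i"
    proof (intro allI impI)
      fix i assume "i < j" then have "i < ?k" using j by (rule less_trans)
      then show "\<not> P i" by (rule not_less_Least)
    qed
    then have "Q j \<longleftrightarrow> P j" by (rule assms)
    moreover have "\<not> P j" using j by (rule not_less_Least)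
    ultimately show ?thesis by blast
  qed
  have "(LEAST k. Q k) = ?k"
  proof (rule Least_equality[where P=Q, OF Qk])
    fix y assume "Q y" then show "?k \<le> y" using nQ[of y] by (meson not_le)
  qed
  then show ?thesis .
next
  case False
  have "Q = P"
  proof
    fix k have "\<forall>j<k. \<not> P j" using False by simp
    then show "Q k = P k" by (rule assms)
  qed
  then show ?thesis by simp
qed

lemma del_conj:
  assumes inv: "\<And>x. m (m x) = x" and mfix: "\<And>f. f \<in> eflags {e} \<Longrightarrow> m f = f"
    and e: "e \<in> redges H"
  shows "del_edge e (cnj m H) = cnj m (del_edge e H)"
proof -
  let ?g = "rgam H" and ?gc = "m \<circ> rgam H \<circ> m"
  let ?Fe = "eflags {e}"
  have mFe: "m z \<in> ?Fe \<longleftrightarrow> z \<in> ?Fe" for z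
  proof
    assume a: "m z \<in> ?Fe"
    then have "m (m z) = m z" by (rule mfix)
    then show "z \<in> ?Fe" using inv a by simp
  next
    assume "z \<in> ?Fe" then show "m z \<in> ?Fe" using mfix by simp
  qed
  have rg_eq: "(let k = LEAST k. ((?gc \<circ> fl_beta) ^^ k) (?gc f) \<notin> ?Fe
                in ((?gc \<circ> fl_beta) ^^ k) (?gc f))
     = m (let k = LEAST k. ((?g \<circ> fl_beta) ^^ k) (?g (m f)) \<notin> ?Fe
                in ((?g \<circ> fl_beta) ^^ k) (?g (m f)))" for f
  proof -
    define rho where "rho = ?g \<circ> fl_beta"
    define rc where "rc = ?gc \<circ> fl_beta"
    define y where "y = ?g (m f)"
    have y0: "?gc f = m y" by (simp add: y_def)
    have claim: "(\<forall>j<k. (rho ^^ j) y \<in> ?Fe) \<longrightarrow> (rc ^^ k) (m y) = m ((rho ^^ k) y)" for k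
    proof (induction k)
      case 0 then show ?case by simp
    next
      case (Suc k)
      show ?case
      proof
        assume h: "\<forall>j<Suc k. (rho ^^ j) y \<in> ?Fe"
        then have ih: "(rc ^^ k) (m y) = m ((rho ^^ k) y)"
          using Suc.IH by simp
        have zk: "(rho ^^ k) y \<in> ?Fe" using h by simp
        then have bz: "fl_beta ((rho ^^ k) y) \<in> ?Fe" by simp
        have "(rc ^^ Suc k) (m y) = rc (m ((rho ^^ k) y))" using ih by simp
        also have "\<dots> = m (?g (m (fl_beta (m ((rho ^^ k) y)))))" by (simp add: rc_def)
        also have "\<dots> = m (rho ((rho ^^ k) y))" using mfix[OF zk] mfix[OF bz] by (simp add: rho_def)
        finally show "(rc ^^ Suc k) (m y) = m ((rho ^^ Suc k) y)" by simp
      qed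
    qed
    have lq: "(LEAST k. (rc ^^ k) (m y) \<notin> ?Fe) = (LEAST k. (rho ^^ k) y \<notin> ?Fe)"
    proof (rule least_cong)
      fix k assume "\<forall>j<k. \<not> (rho ^^ j) y \<notin> ?Fe"
      then have "(rc ^^ k) (m y) = m ((rho ^^ k) y)" using claim by blast
      then show "(rc ^^ k) (m y) \<notin> ?Fe \<longleftrightarrow> (rho ^^ k) y \<notin> ?Fe" using mFe by metis
    qed
    have "\<forall>j<(LEAST k. (rho ^^ k) y \<notin> ?Fe). (rho ^^ j) y \<in> ?Fe"
      using not_less_Least by blast
    then have "(rc ^^ (LEAST k. (rho ^^ k) y \<notin> ?Fe)) (m y) = m ((rho ^^ (LEAST k. (rho ^^ k) y \<notin> ?Fe)) y)"
      using claim by blast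
    moreover have e1: "?gc \<circ> fl_beta = rc" by (simp add: rc_def)
    moreover have e2: "?g \<circ> fl_beta = rho" by (simp add: rho_def)
    moreover have e3: "?g (m f) = y" by (simp add: y_def)
    ultimately show ?thesis unfolding Let_def e1 e2 e3 y0 lq by simp
  qed
  have riso_eq: "{C \<in> eflags (redges H) // (vrel (cnj m H))\<^sup>*. C \<subseteq> ?Fe}
      = {C \<in> eflags (redges H) // (vrel H)\<^sup>*. C \<subseteq> ?Fe}"
  proof
    show "{C \<in> eflags (redges H) // (vrel H)\<^sup>*. C \<subseteq> ?Fe} \<subseteq> {C \<in> eflags (redges H) // (vrel (cnj m H))\<^sup>*. C \<subseteq> ?Fe}"
      by (rule eclasses_sub[OF inv mfix e])
    show "{C \<in> eflags (redges H) // (vrel (cnj m H))\<^sup>*. C \<subseteq> ?Fe} \<subseteq> {C \<in> eflags (redges H) // (vrel H)\<^sup>*. C \<subseteq> ?Fe}"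
      using eclasses_sub[OF inv mfix, where H = "cnj m H"] e cnj_conj[of m H, OF inv] by simp
  qed
  show ?thesis
  proof (rule rgraph.equality)
    show "redges (del_edge e (cnj m H)) = redges (cnj m (del_edge e H))"
      by (simp add: del_edge_def)
    show "riso (del_edge e (cnj m H)) = riso (cnj m (del_edge e H))"
      using riso_eq by (simp add: del_edge_def)
    show "rgraph.more (del_edge e (cnj m H)) = rgraph.more (cnj m (del_edge e H))"
      by (simp add: del_edge_def cnj_def)
    show "rgam (del_edge e (cnj m H)) = rgam (cnj m (del_edge e H))"
    proof
      fix f
      show "rgam (del_edge e (cnj m H)) f = rgam (cnj m (del_edge e H)) f"
        using rg_eq[of f] by (simp only: rgam_del cnj_simps comp_apply Let_def)
    qed
  qed
qed



lemma dl_inv[simp]: "dl_map A (dl_map A x) = x"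
  by (cases x) (auto simp: dl_map_def)
lemma tw_inv[simp]: "tw_map A (tw_map A x) = x"
  by (cases x) (auto simp: tw_map_def)
lemma dl_fst[simp]: "fst (dl_map A x) = fst x"
  by (cases x) (auto simp: dl_map_def)
lemma tw_fst[simp]: "fst (tw_map A x) = fst x"
  by (cases x) (auto simp: tw_map_def)
lemma dl_fix: "e \<notin> A \<Longrightarrow> f \<in> eflags {e} \<Longrightarrow> dl_map A f = f"
  by (cases f) (auto simp: dl_map_def eflags_def)
lemma tw_fix: "e \<notin> A \<Longrightarrow> f \<in> eflags {e} \<Longrightarrow> tw_map A f = f"
  by (cases f) (auto simp: tw_map_def eflags_def)
lemma tw_beta: "tw_map A (fl_beta x) = fl_beta (tw_map A x)"
  by (cases x) (auto simp: tw_map_def fl_beta_def)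

lemma rg_pdual: "ribbon_graph H \<Longrightarrow> ribbon_graph (pdual A H)"
  unfolding pdual_conj by (rule rg_conj) auto
lemma rg_ppetrial: "ribbon_graph H \<Longrightarrow> ribbon_graph (ppetrial A H)"
  unfolding ppetrial_conj by (rule rg_conj) auto

lemma redges_pdual[simp]: "redges (pdual A H) = redges H"
  by (simp add: pdual_def)
lemma redges_ppetrial[simp]: "redges (ppetrial A H) = redges H"
  by (simp add: ppetrial_def)
lemma redges_del[simp]: "redges (del_edge e H) = redges H - {e}"
  by (simp add: del_edge_def)

lemma del_pdual: "e \<notin> A \<Longrightarrow> e \<in> redges H \<Longrightarrow> del_edge e (pdual A H) = pdual A (del_edge e H)"
  unfolding pdual_conj by (rule del_conj) (auto simp: dl_fix)
lemma del_ppetrial: "e \<notin> A \<Longrightarrow> e \<in> redges H \<Longrightarrow> del_edge e (ppetrial A H) = ppetrial A (del_edge e H)"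
  unfolding ppetrial_conj by (rule del_conj) (auto simp: tw_fix)

lemma vrel_iff: "(x, y) \<in> vrel H \<longleftrightarrow> x \<in> eflags (redges H) \<and> (y = fl_beta x \<or> y = rgam H x)"
  unfolding vrel_def by blast

lemma rtr_img:
  assumes inv: "\<And>x. h (h x) = x"
  shows "(u, v) \<in> (map_prod h h ` R)\<^sup>* \<longleftrightarrow> (h u, h v) \<in> R\<^sup>*"
proof
  assume "(u, v) \<in> (map_prod h h ` R)\<^sup>*"
  then show "(h u, h v) \<in> R\<^sup>*"
  proof induction
    case base then show ?case by simp
  next
    case (step y z)
    then obtain a b where "(a, b) \<in> R" "y = h a" "z = h b" by auto
    then show ?case using step.IH inv by (auto intro: rtrancl_into_rtrancl)
  qed
next
  assume "(h u, h v) \<in> R\<^sup>*"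
  then have "(h (h u), h (h v)) \<in> (map_prod h h ` R)\<^sup>*"
  proof induction
    case base then show ?case by simp
  next
    case (step y z)
    then have "(h y, h z) \<in> map_prod h h ` R" by auto
    then show ?case using step.IH by (auto intro: rtrancl_into_rtrancl)
  qed
  then show "(u, v) \<in> (map_prod h h ` R)\<^sup>*" using inv by simp
qed

lemma vcount_conj_beta:
  assumes inv: "\<And>x. h (h x) = x" and fs: "\<And>x. fst (h x) = fst x"
    and hb: "\<And>x. h (fl_beta x) = fl_beta (h x)"
  shows "vcount (cnj h H) = vcount H"
proof -
  let ?F = "eflags (redges H)"
  have hF: "h x \<in> ?F \<longleftrightarrow> x \<in> ?F" for x by (simp add: eflags_iff fs)
  have vr: "vrel (cnj h H) = map_prod h h ` vrel H"
  proof
    show "vrel (cnj h H) \<subseteq> map_prod h h ` vrel H"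
    proof
      fix p assume "p \<in> vrel (cnj h H)"
      obtain f y where p: "p = (f, y)" by (cases p)
      then have f: "f \<in> ?F" "p = (f, fl_beta f) \<or> p = (f, h (rgam H (h f)))"
        using \<open>p \<in> vrel (cnj h H)\<close> vrel_iff[of f y "cnj h H"] by auto
      have hf: "h f \<in> ?F" using f hF by simp
      show "p \<in> map_prod h h ` vrel H"
      proof (cases "p = (f, fl_beta f)")
        case True
        have "(h f, fl_beta (h f)) \<in> vrel H" using hf unfolding vrel_def by blast
        moreover have "map_prod h h (h f, fl_beta (h f)) = p" using True inv hb by simp
        ultimately show ?thesis by (metis image_eqI)
      next
        case False
        then have p: "p = (f, h (rgam H (h f)))" using f by blast
        have "(h f, rgam H (h f)) \<in> vrel H" using hf unfolding vrel_def by blast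
        moreover have "map_prod h h (h f, rgam H (h f)) = p" using p inv by simp
        ultimately show ?thesis by (metis image_eqI)
      qed
    qed
  next
    show "map_prod h h ` vrel H \<subseteq> vrel (cnj h H)"
    proof
      fix p assume "p \<in> map_prod h h ` vrel H"
      then obtain q where q: "q \<in> vrel H" "p = map_prod h h q" by auto
      obtain f y where qq: "q = (f, y)" by (cases q)
      then have f: "f \<in> ?F" "q = (f, fl_beta f) \<or> q = (f, rgam H f)" "p = map_prod h h q"
        using q vrel_iff[of f y H] by auto
      have hf: "h f \<in> ?F" using f hF by simp
      show "p \<in> vrel (cnj h H)"
      proof (cases "q = (f, fl_beta f)")
        case True
        then have "p = (h f, fl_beta (h f))" using f hb by simp
        then show ?thesis using hf by (simp add: vrel_iff)
      next
        case False
        then have "p = (h f, h (rgam H (h (h f))))" using f inv by auto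
        then show ?thesis using hf by (simp add: vrel_iff)
      qed
    qed
  qed
  have cls: "(vrel (cnj h H))\<^sup>* `` {h x} = h ` ((vrel H)\<^sup>* `` {x})" for x
  proof
    show "(vrel (cnj h H))\<^sup>* `` {h x} \<subseteq> h ` ((vrel H)\<^sup>* `` {x})"
    proof
      fix v assume "v \<in> (vrel (cnj h H))\<^sup>* `` {h x}"
      then have "(h (h x), h v) \<in> (vrel H)\<^sup>*" using rtr_img[of h, OF inv] vr by simp
      then have "h v \<in> (vrel H)\<^sup>* `` {x}" using inv by simp
      then show "v \<in> h ` ((vrel H)\<^sup>* `` {x})" using inv by (metis image_eqI)
    qed
  next
    show "h ` ((vrel H)\<^sup>* `` {x}) \<subseteq> (vrel (cnj h H))\<^sup>* `` {h x}"
    proof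
      fix v assume "v \<in> h ` ((vrel H)\<^sup>* `` {x})"
      then obtain w where w: "(x, w) \<in> (vrel H)\<^sup>*" "v = h w" by auto
      then have "(h (h x), h (h w)) \<in> (vrel H)\<^sup>*" using inv by simp
      then have "(h x, h w) \<in> (vrel (cnj h H))\<^sup>*" using rtr_img[of h, OF inv] vr by simp
      then show "v \<in> (vrel (cnj h H))\<^sup>* `` {h x}" using w by simp
    qed
  qed
  have hFF: "h ` ?F = ?F" using hF inv by (metis (no_types, lifting) image_eqI subsetI subset_antisym image_subset_iff)
  have q: "?F // (vrel (cnj h H))\<^sup>* = (\<lambda>C. h ` C) ` (?F // (vrel H)\<^sup>*)"
  proof -
    have "?F // (vrel (cnj h H))\<^sup>* = (\<lambda>x. (vrel (cnj h H))\<^sup>* `` {x}) ` ?F"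
      unfolding quotient_def by auto
    also have "\<dots> = (\<lambda>x. (vrel (cnj h H))\<^sup>* `` {h x}) ` ?F"
      using hFF by (metis (no_types, lifting) image_cong image_image)
    also have "\<dots> = (\<lambda>x. h ` ((vrel H)\<^sup>* `` {x})) ` ?F" using cls by simp
    also have "\<dots> = (\<lambda>C. h ` C) ` (?F // (vrel H)\<^sup>*)"
      unfolding quotient_def by auto
    finally show ?thesis .
  qed
  have injh: "inj_on (\<lambda>C. h ` C) X" for X
  proof (rule inj_onI)
    fix C D assume "h ` C = h ` D"
    then have "h ` h ` C = h ` h ` D" by simp
    then show "C = D" using inv by (simp add: image_image)
  qed
  show ?thesis unfolding vcount_def cnj_simps(1,2) q using card_image[OF injh] by simp
qed

lemma vcount_ppetrial: "vcount (ppetrial A H) = vcount H"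
  unfolding ppetrial_conj by (rule vcount_conj_beta) (auto simp: tw_beta)



lemma cnj_comm: "(\<And>x. a (b x) = b (a x)) \<Longrightarrow> cnj a (cnj b H) = cnj b (cnj a H)"
  by (simp add: cnj_def comp_def)

lemma cnj_merge: "(\<And>x. a (b x) = b (a x)) \<Longrightarrow> cnj a (cnj b H) = cnj (a \<circ> b) H"
  by (simp add: cnj_def comp_def)

lemma dl_ins: "e \<notin> A \<Longrightarrow> dl_map (insert e A) = dl_map A \<circ> dl_map {e}"
  by (auto simp: dl_map_def fun_eq_iff)
lemma tw_ins: "e \<notin> A \<Longrightarrow> tw_map (insert e A) = tw_map A \<circ> tw_map {e}"
  by (auto simp: tw_map_def fun_eq_iff)

lemma dl_dl_comm: "dl_map A (dl_map B x) = dl_map B (dl_map A x)"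
  by (cases x) (auto simp: dl_map_def)
lemma tw_tw_comm: "tw_map A (tw_map B x) = tw_map B (tw_map A x)"
  by (cases x) (auto simp: tw_map_def)
lemma dl_tw_comm: "e \<notin> A \<Longrightarrow> dl_map A (tw_map {e} x) = tw_map {e} (dl_map A x)"
  by (cases x) (auto simp: dl_map_def tw_map_def)
lemma tw_dl_comm: "e \<notin> A \<Longrightarrow> tw_map A (dl_map {e} x) = dl_map {e} (tw_map A x)"
  by (cases x) (auto simp: dl_map_def tw_map_def)

lemma pdual_ins: assumes "e \<notin> A" shows "pdual (insert e A) H = pdual A (pdual {e} H)"
  unfolding pdual_conj cnj_merge[of "dl_map A" "dl_map {e}", OF dl_dl_comm] dl_ins[OF assms] by (rule refl)
lemma ppetrial_ins: assumes "e \<notin> A" shows "ppetrial (insert e A) H = ppetrial A (ppetrial {e} H)"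
  unfolding ppetrial_conj cnj_merge[of "tw_map A" "tw_map {e}", OF tw_tw_comm] tw_ins[OF assms] by (rule refl)

lemma pd_pd_comm: "e \<notin> A \<Longrightarrow> pdual A (pdual {e} H) = pdual {e} (pdual A H)"
  unfolding pdual_conj by (rule cnj_comm) (rule dl_dl_comm)
lemma pt_pt_comm: "e \<notin> A \<Longrightarrow> ppetrial A (ppetrial {e} H) = ppetrial {e} (ppetrial A H)"
  unfolding ppetrial_conj by (rule cnj_comm) (rule tw_tw_comm)
lemma pd_pt_comm: "e \<notin> A \<Longrightarrow> pdual A (ppetrial {e} H) = ppetrial {e} (pdual A H)"
  unfolding pdual_conj ppetrial_conj by (rule cnj_comm) (rule dl_tw_comm)
lemma pt_pd_comm: "e \<notin> A \<Longrightarrow> ppetrial A (pdual {e} H) = pdual {e} (ppetrial A H)"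
  unfolding pdual_conj ppetrial_conj by (rule cnj_comm) (rule tw_dl_comm)

lemma del_pdual': "e \<notin> A \<Longrightarrow> e \<in> redges H \<Longrightarrow> pdual A (del_edge e H) = del_edge e (pdual A H)"
  by (simp add: del_pdual)
lemma del_ppetrial': "e \<notin> A \<Longrightarrow> e \<in> redges H \<Longrightarrow> ppetrial A (del_edge e H) = del_edge e (ppetrial A H)"
  by (simp add: del_ppetrial)

lemma pdual_ins_blk: "e \<notin> E' \<Longrightarrow> pdual (insert e (blk E' c i)) H = pdual (blk E' c i) (pdual {e} H)"
  by (rule pdual_ins) (simp add: blk_def)
lemma ppetrial_ins_blk: "e \<notin> E' \<Longrightarrow> ppetrial (insert e (blk E' c i)) H = ppetrial (blk E' c i) (ppetrial {e} H)"
  by (rule ppetrial_ins) (simp add: blk_def)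

lemmas norm_simps = pdual_ins_blk ppetrial_ins_blk pd_pd_comm pt_pt_comm pd_pt_comm pt_pd_comm
  del_pdual' del_ppetrial' vcount_del_edge rg_pdual rg_ppetrial vcount_ppetrial
  op_td_def op_dt_def op_tdt_def contract_def

lemma blk_upd: "e \<notin> E' \<Longrightarrow> blk (insert e E') (c(e := y)) i = (if y = i then insert e (blk E' c i) else blk E' c i)"
  by (auto simp: blk_def)

lemma e_blk: "e \<notin> E' \<Longrightarrow> e \<notin> blk E' c i"
  by (simp add: blk_def)

lemma sum_PiE_split:
  assumes "e \<notin> E'" "finite E'"
  shows "(\<Sum>c \<in> insert e E' \<rightarrow>\<^sub>E {..<n}. f c) = (\<Sum>y<n. \<Sum>c \<in> E' \<rightarrow>\<^sub>E {..<(n::nat)}. f (c(e := y)))"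
proof -
  have "(\<Sum>c \<in> insert e E' \<rightarrow>\<^sub>E {..<n}. f c)
      = (\<Sum>c \<in> (\<lambda>(y, g). g(e := y)) ` ({..<n} \<times> (E' \<rightarrow>\<^sub>E {..<n})). f c)"
    by (simp add: PiE_insert_eq)
  also have "\<dots> = (\<Sum>p \<in> {..<n} \<times> (E' \<rightarrow>\<^sub>E {..<n}). f ((\<lambda>(y, g). g(e := y)) p))"
    by (rule sum.reindex_cong[OF inj_combinator[OF assms(1)]]) auto
  also have "\<dots> = (\<Sum>y<n. \<Sum>c \<in> E' \<rightarrow>\<^sub>E {..<n}. f (c(e := y)))"
    by (simp add: sum.cartesian_product case_prod_unfold)
  finally show ?thesis .
qed

lemma sum3: "(\<Sum>y<(3::nat). f y) = f 0 + f 1 + f 2"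
  by (simp add: eval_nat_numeral)
lemma sum6: "(\<Sum>y<(6::nat). f y) = f 0 + f 1 + f 2 + f 3 + f 4 + f 5"
  by (simp add: eval_nat_numeral)

context
  fixes G :: "'e rgraph" and e :: 'e
  assumes rg: "ribbon_graph G" and e: "e \<in> redges G"
begin

lemma part1: "P_d G = P_d (del_edge e G) + P_d (contract e G)"
proof -
  define E' where "E' = redges G - {e}"
  have E: "redges G = insert e E'" "e \<notin> E'" using e E'_def by auto
  have fin: "finite E'" using rg E'_def by (simp add: ribbon_graph_def)
  have "P_d G = (\<Sum>A \<in> Pow E'. monom 1 (vcount (pdual A G))) + (\<Sum>A \<in> insert e ` Pow E'. monom 1 (vcount (pdual A G)))"
    unfolding P_d_def E(1) Pow_insert
    by (rule sum.union_disjoint) (use fin E(2) in auto)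
  also have "(\<Sum>A \<in> insert e ` Pow E'. monom 1 (vcount (pdual A G))) = (\<Sum>A \<in> Pow E'. monom 1 (vcount (pdual (insert e A) G)))"
    by (rule sum.reindex_cong[where l="insert e"]) (use E(2) in \<open>auto simp: inj_on_def\<close>)
  also have "(\<Sum>A \<in> Pow E'. monom 1 (vcount (pdual A G))) = P_d (del_edge e G)"
    unfolding P_d_def redges_del E'_def[symmetric]
  proof (rule sum.cong[OF refl])
    fix A assume "A \<in> Pow E'"
    then have "e \<notin> A" using E by auto
    then show "monom 1 (vcount (pdual A G)) = monom 1 (vcount (pdual A (del_edge e G)))"
      using rg e by (simp add: norm_simps)
  qed
  also have "(\<Sum>A \<in> Pow E'. monom 1 (vcount (pdual (insert e A) G))) = P_d (contract e G)"
    unfolding P_d_def contract_def redges_del redges_pdual E'_def[symmetric]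
  proof (rule sum.cong[OF refl])
    fix A assume "A \<in> Pow E'"
    then have "e \<notin> A" using E by auto
    then show "monom 1 (vcount (pdual (insert e A) G)) = monom 1 (vcount (pdual A (del_edge e (pdual {e} G))))"
      using rg e by (simp add: norm_simps pdual_ins[OF \<open>e \<notin> A\<close>])
  qed
  finally show ?thesis .
qed

lemma part2: "P_tdt G = P_tdt (del_edge e G) + P_tdt (contract e (ppetrial {e} G))"
proof -
  define E' where "E' = redges G - {e}"
  have E: "redges G = insert e E'" "e \<notin> E'" using e E'_def by auto
  have fin: "finite E'" using rg E'_def by (simp add: ribbon_graph_def)
  have "P_tdt G = (\<Sum>A \<in> Pow E'. monom 1 (vcount (op_tdt A G))) + (\<Sum>A \<in> insert e ` Pow E'. monom 1 (vcount (op_tdt A G)))"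
    unfolding P_tdt_def E(1) Pow_insert
    by (rule sum.union_disjoint) (use fin E(2) in auto)
  also have "(\<Sum>A \<in> insert e ` Pow E'. monom 1 (vcount (op_tdt A G))) = (\<Sum>A \<in> Pow E'. monom 1 (vcount (op_tdt (insert e A) G)))"
    by (rule sum.reindex_cong[where l="insert e"]) (use E(2) in \<open>auto simp: inj_on_def\<close>)
  also have "(\<Sum>A \<in> Pow E'. monom 1 (vcount (op_tdt A G))) = P_tdt (del_edge e G)"
    unfolding P_tdt_def redges_del E'_def[symmetric]
  proof (rule sum.cong[OF refl])
    fix A assume "A \<in> Pow E'"
    then have "e \<notin> A" using E by auto
    then show "monom 1 (vcount (op_tdt A G)) = monom 1 (vcount (op_tdt A (del_edge e G)))"
      using rg e by (simp add: norm_simps)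
  qed
  also have "(\<Sum>A \<in> Pow E'. monom 1 (vcount (op_tdt (insert e A) G))) = P_tdt (contract e (ppetrial {e} G))"
    unfolding P_tdt_def contract_def redges_del redges_pdual redges_ppetrial E'_def[symmetric]
  proof (rule sum.cong[OF refl])
    fix A assume "A \<in> Pow E'"
    then have "e \<notin> A" using E by auto
    then show "monom 1 (vcount (op_tdt (insert e A) G)) = monom 1 (vcount (op_tdt A (del_edge e (pdual {e} (ppetrial {e} G)))))"
      using rg e by (simp add: norm_simps pdual_ins[OF \<open>e \<notin> A\<close>] ppetrial_ins[OF \<open>e \<notin> A\<close>])
  qed
  finally show ?thesis .
qed

lemma part3: "P_dt G = P_dt (del_edge e G) + P_dt (contract e G) + P_dt (contract e (ppetrial {e} G))"
proof -
  define E' where "E' = redges G - {e}"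
  have E: "redges G = insert e E'" "e \<notin> E'" using e E'_def by auto
  have fin: "finite E'" using rg E'_def by (simp add: ribbon_graph_def)
  let ?T = "\<lambda>c. monom 1 (vcount (op_dt (blk (insert e E') c 2) (op_td (blk (insert e E') c 1) G))) :: int poly"
  have "P_dt G = (\<Sum>y<3. \<Sum>c \<in> E' \<rightarrow>\<^sub>E {..<3}. ?T (c(e := y)))"
    unfolding P_dt_def E(1) by (rule sum_PiE_split[OF E(2) fin])
  also have "\<dots> = (\<Sum>c \<in> E' \<rightarrow>\<^sub>E {..<3}. ?T (c(e := 0))) + (\<Sum>c \<in> E' \<rightarrow>\<^sub>E {..<3}. ?T (c(e := 1)))
      + (\<Sum>c \<in> E' \<rightarrow>\<^sub>E {..<3}. ?T (c(e := 2)))"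
    by (rule sum3)
  also have "(\<Sum>c \<in> E' \<rightarrow>\<^sub>E {..<3}. ?T (c(e := 0))) = P_dt (del_edge e G)"
    unfolding P_dt_def redges_del E'_def[symmetric]
    by (rule sum.cong[OF refl]) (use rg e E(2) in \<open>simp add: blk_upd e_blk norm_simps\<close>)
  also have "(\<Sum>c \<in> E' \<rightarrow>\<^sub>E {..<3}. ?T (c(e := 1))) = P_dt (contract e G)"
    unfolding P_dt_def contract_def redges_del redges_pdual E'_def[symmetric]
    by (rule sum.cong[OF refl]) (use rg e E(2) in \<open>simp add: blk_upd e_blk norm_simps\<close>)
  also have "(\<Sum>c \<in> E' \<rightarrow>\<^sub>E {..<3}. ?T (c(e := 2))) = P_dt (contract e (ppetrial {e} G))"
    unfolding P_dt_def contract_def redges_del redges_pdual redges_ppetrial E'_def[symmetric]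
    by (rule sum.cong[OF refl]) (use rg e E(2) in \<open>simp add: blk_upd e_blk norm_simps\<close>)
  finally show ?thesis .
qed

lemma part4: "P_all G = 2 * (P_all (del_edge e G) + P_all (contract e G)
                      + P_all (contract e (ppetrial {e} G)))"
proof -
  define E' where "E' = redges G - {e}"
  have E: "redges G = insert e E'" "e \<notin> E'" using e E'_def by auto
  have fin: "finite E'" using rg E'_def by (simp add: ribbon_graph_def)
  let ?T = "\<lambda>c. monom 1 (vcount
       (op_tdt (blk (insert e E') c 5)
        (op_dt (blk (insert e E') c 4)
         (op_td (blk (insert e E') c 3)
          (ppetrial (blk (insert e E') c 2)
           (pdual (blk (insert e E') c 1) G)))))) :: int poly"
  let ?S = "\<lambda>y. \<Sum>c \<in> E' \<rightarrow>\<^sub>E {..<6}. ?T (c(e := y))"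
  have "P_all G = (\<Sum>y<6. ?S y)"
    unfolding P_all_def E(1) by (rule sum_PiE_split[OF E(2) fin])
  also have "\<dots> = ?S 0 + ?S 1 + ?S 2 + ?S 3 + ?S 4 + ?S 5"
    by (rule sum6)
  also have s0: "?S 0 = P_all (del_edge e G)"
    unfolding P_all_def redges_del E'_def[symmetric]
    by (rule sum.cong[OF refl]) (use rg e E(2) in \<open>simp add: blk_upd e_blk norm_simps\<close>)
  also have s2: "?S 2 = P_all (del_edge e G)"
    unfolding P_all_def redges_del E'_def[symmetric]
    by (rule sum.cong[OF refl]) (use rg e E(2) in \<open>simp add: blk_upd e_blk norm_simps\<close>)
  also have s1: "?S 1 = P_all (contract e G)"
    unfolding P_all_def contract_def redges_del redges_pdual E'_def[symmetric]
    by (rule sum.cong[OF refl]) (use rg e E(2) in \<open>simp add: blk_upd e_blk norm_simps\<close>)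
  also have s3: "?S 3 = P_all (contract e G)"
    unfolding P_all_def contract_def redges_del redges_pdual E'_def[symmetric]
    by (rule sum.cong[OF refl]) (use rg e E(2) in \<open>simp add: blk_upd e_blk norm_simps\<close>)
  also have s4: "?S 4 = P_all (contract e (ppetrial {e} G))"
    unfolding P_all_def contract_def redges_del redges_pdual redges_ppetrial E'_def[symmetric]
    by (rule sum.cong[OF refl]) (use rg e E(2) in \<open>simp add: blk_upd e_blk norm_simps\<close>)
  also have s5: "?S 5 = P_all (contract e (ppetrial {e} G))"
    unfolding P_all_def contract_def redges_del redges_pdual redges_ppetrial E'_def[symmetric]
    by (rule sum.cong[OF refl]) (use rg e E(2) in \<open>simp add: blk_upd e_blk norm_simps\<close>)
  finally show ?thesis by (simp add: algebra_simps)
qed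

end

theorem mainTheorem4:
  fixes G :: "'e rgraph" and e :: 'e
  assumes "ribbon_graph G" and "e \<in> redges G"
  shows "P_d G = P_d (del_edge e G) + P_d (contract e G)
    \<and> P_tdt G = P_tdt (del_edge e G) + P_tdt (contract e (ppetrial {e} G))
    \<and> P_dt G = P_dt (del_edge e G) + P_dt (contract e G) + P_dt (contract e (ppetrial {e} G))
    \<and> P_all G = 2 * (P_all (del_edge e G) + P_all (contract e G)
                      + P_all (contract e (ppetrial {e} G)))"
  using part1[OF assms] part2[OF assms] part3[OF assms] part4[OF assms] by blast

end
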